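(* Let $\mathbb{C}$ be a modified category of interest and $\mathcal{X}=(\partial\colon E\to R)$, $\mathcal{X}'=(\partial'\colon E'\to R')$ crossed modules in $\mathbb{C}$. There is a groupoid $\mathrm{HOM}(\mathcal{X},\mathcal{X}')$ whose objects are the crossed module morphisms $\mathcal{X}\to\mathcal{X}'$ and whose morphisms from $f$ to $g$ are the homotopies $(f_0,s)$ connecting $f$ to $g$ (identities given by the zero derivation, inverses by $s\mapsto -s$, composition by pointwise sum $s+s'$). In particular, the relation on crossed module morphisms $\mathcal{X}\to\mathcal{X}'$ given by "$f\simeq g$ if and only if there exists an $f_0$-derivation $s$ connecting $f$ to $g$" is an equivalence relation.
   Context: A modified category of interest (MCI) is a category $\mathbb{C}$ of groups (written additively) with additional unary and binary operations: $\Omega=\Omega_0\cup\Omega_1\cup\Omega_2$, $\Omega_0=\{0\}$, $\Omega_2'=\Omega_2\setminus\{+\}$ closed under $x*^\circ y=y*x$, with $x*(y+z)=x*y+x*z$, unary operations other than $-$ compatible with $+$ and $*$, $x_1+(x_2*x_3)=(x_2*x_3)+x_1$, and each $(x_1*x_2)\bar*x_3$ expressible as a word in the products $x_i(x_jx_k),(x_jx_k)x_i$, $i\in\{1,2\}$. A derived action of $R$ on $E$ consists of maps $r\cdot e=\sigma(r)+e-\sigma(r)$, $r*e=\sigma(r)*e$ ($*\in\Omega_2'$) induced by a split extension of $R$ by $E$ with section $\sigma$. A crossed module is a morphism $\partial\colon E\to R$ with a derived action satisfying $\partial(r\cdot e)=r+\partial(e)-r$, $\partial(r*e)=r*\partial(e)$,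 $\partial(e)\cdot e'=e+e'-e$, $\partial(e)*e'=e*e'$. A crossed module morphism $(f_1,f_0)$ satisfies $\partial'f_1=f_0\partial$, $f_1(r\cdot e)=f_0(r)\cdot f_1(e)$, $f_1(r*e)=f_0(r)*f_1(e)$. For a morphism $f_0\colon R\to R'$, an $f_0$-derivation is a map $s\colon R\to E'$ with $s(g+h)=\big(f_0(-h)\cdot s(g)\big)+s(h)$ and $s(g*h)=f_0(g)*s(h)+f_0(h)*^\circ s(g)+s(g)*s(h)$ for all $g,h\in R$, $*\in\Omega_2'$. An $f_0$-derivation $s$ connects $f$ to $g$ (a homotopy $(f_0,s)$ from $f$ to $g$) if $g_0(r)=f_0(r)+\partial'(s(r))$ and $g_1(e)=f_1(e)+s(\partial(e))$ for all $r\in R$, $e\in E$. *)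

theory Defs
  imports Main
begin

text \<open>Binary operations other than + are indexed by the type 'o (this is Omega2'),
  unary operations other than - are indexed by the type 'u (this is Omega1').\<close>

record ('a, 'o, 'u) alg =
  carrier :: "'a set"
  plus :: "'a \<Rightarrow> 'a \<Rightarrow> 'a"
  neg :: "'a \<Rightarrow> 'a"
  zero :: "'a"
  bin :: "'o \<Rightarrow> 'a \<Rightarrow> 'a \<Rightarrow> 'a"
  un :: "'u \<Rightarrow> 'a \<Rightarrow> 'a"

datatype ('o, 'u) trm =
    Var nat
  | Zero
  | Plus "('o, 'u) trm" "('o, 'u) trm"
  | Neg "('o, 'u) trm"
  | Bin 'o "('o, 'u) trm" "('o, 'u) trm"
  | UnOp 'u "('o, 'u) trm"

fun eval :: "('a, 'o, 'u, 'z) alg_scheme \<Rightarrow> (nat \<Rightarrow> 'a) \<Rightarrow> ('o, 'u) trm \<Rightarrow> 'a" where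
  "eval A \<rho> (Var n) = \<rho> n"
| "eval A \<rho> Zero = zero A"
| "eval A \<rho> (Plus t u) = plus A (eval A \<rho> t) (eval A \<rho> u)"
| "eval A \<rho> (Neg t) = neg A (eval A \<rho> t)"
| "eval A \<rho> (Bin o' t u) = bin A o' (eval A \<rho> t) (eval A \<rho> u)"
| "eval A \<rho> (UnOp u' t) = un A u' (eval A \<rho> t)"

definition group_alg :: "('a, 'o, 'u) alg \<Rightarrow> bool" where
  "group_alg A \<longleftrightarrow>
     zero A \<in> carrier A
   \<and> (\<forall>x\<in>carrier A. \<forall>y\<in>carrier A. plus A x y \<in> carrier A)
   \<and> (\<forall>x\<in>carrier A. neg A x \<in> carrier A)
   \<and> (\<forall>o'. \<forall>x\<in>carrier A. \<forall>y\<in>carrier A. bin A o' x y \<in> carrier A)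
   \<and> (\<forall>u'. \<forall>x\<in>carrier A. un A u' x \<in> carrier A)
   \<and> (\<forall>x\<in>carrier A. \<forall>y\<in>carrier A. \<forall>z\<in>carrier A.
        plus A (plus A x y) z = plus A x (plus A y z))
   \<and> (\<forall>x\<in>carrier A. plus A (zero A) x = x \<and> plus A x (zero A) = x)
   \<and> (\<forall>x\<in>carrier A. plus A (neg A x) x = zero A \<and> plus A x (neg A x) = zero A)"

definition satisfies :: "('a, 'o, 'u) alg \<Rightarrow> ('o, 'u) trm \<times> ('o, 'u) trm \<Rightarrow> bool" where
  "satisfies A eq \<longleftrightarrow>
     (\<forall>\<rho>. (\<forall>n. \<rho> n \<in> carrier A) \<longrightarrow> eval A \<rho> (fst eq) = eval A \<rho> (snd eq))"

definition in_C :: "('o, 'u) trm rel \<Rightarrow> ('a, 'o, 'u) alg \<Rightarrow> bool" where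
  "in_C Eqs A \<longleftrightarrow> group_alg A \<and> (\<forall>eq\<in>Eqs. satisfies A eq)"

text \<open>Group words in the products x_i(x_j x_k), (x_j x_k) x_i with i in {x1,x2}
  and {i,j,k} = {1,2,3}; variables x1,x2,x3 are Var 0, Var 1, Var 2.\<close>

inductive grp_word :: "('o, 'u) trm \<Rightarrow> bool" where
  "grp_word Zero"
| "grp_word t \<Longrightarrow> grp_word u \<Longrightarrow> grp_word (Plus t u)"
| "grp_word t \<Longrightarrow> grp_word (Neg t)"
| "i \<in> {0, 1} \<Longrightarrow> {i, j, k} = {0, 1, 2::nat} \<Longrightarrow>
     grp_word (Bin o1 (Var i) (Bin o2 (Var j) (Var k)))"
| "i \<in> {0, 1} \<Longrightarrow> {i, j, k} = {0, 1, 2::nat} \<Longrightarrow>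
     grp_word (Bin o1 (Bin o2 (Var j) (Var k)) (Var i))"

text \<open>A modified category of interest, given by its set of identities Eqs (which
  contains the listed axioms) and by the map conv sending * to *^o.\<close>

definition MCI :: "('o, 'u) trm rel \<Rightarrow> ('o \<Rightarrow> 'o) \<Rightarrow> bool" where
  "MCI Eqs conv \<longleftrightarrow>
     (\<forall>o'. (Bin (conv o') (Var 0) (Var 1), Bin o' (Var 1) (Var 0)) \<in> Eqs)
   \<and> (\<forall>o'. (Bin o' (Var 0) (Plus (Var 1) (Var 2)),
             Plus (Bin o' (Var 0) (Var 1)) (Bin o' (Var 0) (Var 2))) \<in> Eqs)
   \<and> (\<forall>u'. (UnOp u' (Plus (Var 0) (Var 1)), Plus (UnOp u' (Var 0)) (UnOp u' (Var 1))) \<in> Eqs)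
   \<and> (\<forall>u' o'. (UnOp u' (Bin o' (Var 0) (Var 1)), Bin o' (UnOp u' (Var 0)) (Var 1)) \<in> Eqs)
   \<and> (\<forall>o'. (Plus (Var 0) (Bin o' (Var 1) (Var 2)),
             Plus (Bin o' (Var 1) (Var 2)) (Var 0)) \<in> Eqs)
   \<and> (\<forall>o1 o2. \<exists>W. grp_word W \<and> (Bin o2 (Bin o1 (Var 0) (Var 1)) (Var 2), W) \<in> Eqs)"

definition hom :: "('a, 'o, 'u) alg \<Rightarrow> ('b, 'o, 'u) alg \<Rightarrow> ('a \<Rightarrow> 'b) \<Rightarrow> bool" where
  "hom A B f \<longleftrightarrow>
     (\<forall>x\<in>carrier A. f x \<in> carrier B)
   \<and> f (zero A) = zero B
   \<and> (\<forall>x\<in>carrier A. \<forall>y\<in>carrier A. f (plus A x y) = plus B (f x) (f y))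
   \<and> (\<forall>x\<in>carrier A. f (neg A x) = neg B (f x))
   \<and> (\<forall>o'. \<forall>x\<in>carrier A. \<forall>y\<in>carrier A. f (bin A o' x y) = bin B o' (f x) (f y))
   \<and> (\<forall>u'. \<forall>x\<in>carrier A. f (un A u' x) = un B u' (f x))"

text \<open>Every split extension has underlying set
  in bijection with R x E, so the extension object is taken on the type 'r \<times> 'e.\<close>

definition derived_action ::
  "('o, 'u) trm rel \<Rightarrow> ('r, 'o, 'u) alg \<Rightarrow> ('e, 'o, 'u) alg \<Rightarrow>
   ('r \<Rightarrow> 'e \<Rightarrow> 'e) \<Rightarrow> ('o \<Rightarrow> 'r \<Rightarrow> 'e \<Rightarrow> 'e) \<Rightarrow> bool" where
  "derived_action Eqs R E act bact \<longleftrightarrow>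
     (\<forall>r\<in>carrier R. \<forall>e\<in>carrier E. act r e \<in> carrier E \<and> (\<forall>o'. bact o' r e \<in> carrier E))
   \<and> (\<exists>(B :: ('r \<times> 'e, 'o, 'u) alg) p i \<sigma>.
        in_C Eqs B \<and> hom B R p \<and> hom E B i \<and> hom R B \<sigma>
      \<and> inj_on i (carrier E)
      \<and> i ` carrier E = {b \<in> carrier B. p b = zero R}
      \<and> (\<forall>r\<in>carrier R. p (\<sigma> r) = r)
      \<and> (\<forall>r\<in>carrier R. \<forall>e\<in>carrier E.
           i (act r e) = plus B (plus B (\<sigma> r) (i e)) (neg B (\<sigma> r))
         \<and> (\<forall>o'. i (bact o' r e) = bin B o' (\<sigma> r) (i e))))"

record ('e, 'r, 'o, 'u) xmod =
  xE :: "('e, 'o, 'u) alg"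
  xR :: "('r, 'o, 'u) alg"
  bd :: "'e \<Rightarrow> 'r"
  act :: "'r \<Rightarrow> 'e \<Rightarrow> 'e"
  bact :: "'o \<Rightarrow> 'r \<Rightarrow> 'e \<Rightarrow> 'e"

definition crossed_module :: "('o, 'u) trm rel \<Rightarrow> ('e, 'r, 'o, 'u) xmod \<Rightarrow> bool" where
  "crossed_module Eqs X \<longleftrightarrow>
     in_C Eqs (xE X) \<and> in_C Eqs (xR X)
   \<and> hom (xE X) (xR X) (bd X)
   \<and> derived_action Eqs (xR X) (xE X) (act X) (bact X)
   \<and> (\<forall>r\<in>carrier (xR X). \<forall>e\<in>carrier (xE X).
        bd X (act X r e) = plus (xR X) (plus (xR X) r (bd X e)) (neg (xR X) r)
      \<and> (\<forall>o'. bd X (bact X o' r e) = bin (xR X) o' r (bd X e)))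
   \<and> (\<forall>e\<in>carrier (xE X). \<forall>e'\<in>carrier (xE X).
        act X (bd X e) e' = plus (xE X) (plus (xE X) e e') (neg (xE X) e)
      \<and> (\<forall>o'. bact X o' (bd X e) e' = bin (xE X) o' e e'))"

definition xmod_morphism ::
  "('e, 'r, 'o, 'u) xmod \<Rightarrow> ('e2, 'r2, 'o, 'u) xmod \<Rightarrow> ('e \<Rightarrow> 'e2) \<times> ('r \<Rightarrow> 'r2) \<Rightarrow> bool" where
  "xmod_morphism X X' f \<longleftrightarrow>
     hom (xE X) (xE X') (fst f) \<and> hom (xR X) (xR X') (snd f)
   \<and> (\<forall>e\<in>carrier (xE X). bd X' (fst f e) = snd f (bd X e))
   \<and> (\<forall>r\<in>carrier (xR X). \<forall>e\<in>carrier (xE X).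
        fst f (act X r e) = act X' (snd f r) (fst f e)
      \<and> (\<forall>o'. fst f (bact X o' r e) = bact X' o' (snd f r) (fst f e)))"

definition derivation ::
  "('o \<Rightarrow> 'o) \<Rightarrow> ('e, 'r, 'o, 'u) xmod \<Rightarrow> ('e2, 'r2, 'o, 'u) xmod \<Rightarrow>
   ('r \<Rightarrow> 'r2) \<Rightarrow> ('r \<Rightarrow> 'e2) \<Rightarrow> bool" where
  "derivation conv X X' f0 s \<longleftrightarrow>
     (\<forall>r\<in>carrier (xR X). s r \<in> carrier (xE X'))
   \<and> (\<forall>g\<in>carrier (xR X). \<forall>h\<in>carrier (xR X).
        s (plus (xR X) g h) = plus (xE X') (act X' (f0 (neg (xR X) h)) (s g)) (s h))
   \<and> (\<forall>o'. \<forall>g\<in>carrier (xR X). \<forall>h\<in>carrier (xR X).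
        s (bin (xR X) o' g h) =
          plus (xE X')
            (plus (xE X') (bact X' o' (f0 g) (s h)) (bact X' (conv o') (f0 h) (s g)))
            (bin (xE X') o' (s g) (s h)))"

definition connects ::
  "('e, 'r, 'o, 'u) xmod \<Rightarrow> ('e2, 'r2, 'o, 'u) xmod \<Rightarrow>
   ('e \<Rightarrow> 'e2) \<times> ('r \<Rightarrow> 'r2) \<Rightarrow> ('e \<Rightarrow> 'e2) \<times> ('r \<Rightarrow> 'r2) \<Rightarrow> ('r \<Rightarrow> 'e2) \<Rightarrow> bool" where
  "connects X X' f g s \<longleftrightarrow>
     (\<forall>r\<in>carrier (xR X). snd g r = plus (xR X') (snd f r) (bd X' (s r)))
   \<and> (\<forall>e\<in>carrier (xE X). fst g e = plus (xE X') (fst f e) (s (bd X e)))"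

definition homotopic ::
  "('o \<Rightarrow> 'o) \<Rightarrow> ('e, 'r, 'o, 'u) xmod \<Rightarrow> ('e2, 'r2, 'o, 'u) xmod \<Rightarrow>
   (('e \<Rightarrow> 'e2) \<times> ('r \<Rightarrow> 'r2)) rel" where
  "homotopic conv X X' =
     {(f, g). xmod_morphism X X' f \<and> xmod_morphism X X' g
            \<and> (\<exists>s. derivation conv X X' (snd f) s \<and> connects X X' f g s)}"

end

theory Submission
  imports Defs
begin


locale galg =
  fixes A :: "('a,'o,'u) alg"
  assumes ga: "group_alg A"
begin
lemma zero_c[simp]: "zero A \<in> carrier A" using ga unfolding group_alg_def by blast
lemma plus_c[simp]: "x \<in> carrier A \<Longrightarrow> y \<in> carrier A \<Longrightarrow> plus A x y \<in> carrier A" using ga unfolding group_alg_def by blast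
lemma neg_c[simp]: "x \<in> carrier A \<Longrightarrow> neg A x \<in> carrier A" using ga unfolding group_alg_def by blast
lemma bin_c[simp]: "x \<in> carrier A \<Longrightarrow> y \<in> carrier A \<Longrightarrow> bin A o' x y \<in> carrier A" using ga unfolding group_alg_def by blast
lemma assoc[simp]: "x \<in> carrier A \<Longrightarrow> y \<in> carrier A \<Longrightarrow> z \<in> carrier A \<Longrightarrow> plus A (plus A x y) z = plus A x (plus A y z)" using ga unfolding group_alg_def by blast
lemma lz[simp]: "x \<in> carrier A \<Longrightarrow> plus A (zero A) x = x" using ga unfolding group_alg_def by blast
lemma rz[simp]: "x \<in> carrier A \<Longrightarrow> plus A x (zero A) = x" using ga unfolding group_alg_def by blast
lemma ln[simp]: "x \<in> carrier A \<Longrightarrow> plus A (neg A x) x = zero A" using ga unfolding group_alg_def by blast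
lemma rn[simp]: "x \<in> carrier A \<Longrightarrow> plus A x (neg A x) = zero A" using ga unfolding group_alg_def by blast
lemma cl1[simp]: "x \<in> carrier A \<Longrightarrow> y \<in> carrier A \<Longrightarrow> plus A x (plus A (neg A x) y) = y"
  by (metis assoc lz neg_c rn)
lemma cl2[simp]: "x \<in> carrier A \<Longrightarrow> y \<in> carrier A \<Longrightarrow> plus A (neg A x) (plus A x y) = y"
  by (metis assoc lz neg_c ln)
lemma lcancel[simp]: "x \<in> carrier A \<Longrightarrow> y \<in> carrier A \<Longrightarrow> z \<in> carrier A \<Longrightarrow> plus A x y = plus A x z \<longleftrightarrow> y = z"
  by (metis cl2)
lemma neg_unique: "x \<in> carrier A \<Longrightarrow> y \<in> carrier A \<Longrightarrow> plus A x y = zero A \<Longrightarrow> x = neg A y"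
  by (metis assoc lz neg_c rn rz)
lemma neg_neg[simp]: "x \<in> carrier A \<Longrightarrow> neg A (neg A x) = x"
  by (metis neg_c neg_unique rn)
lemma neg_zero[simp]: "neg A (zero A) = zero A"
  by (metis neg_unique lz zero_c)
lemma neg_plus[simp]: "x \<in> carrier A \<Longrightarrow> y \<in> carrier A \<Longrightarrow> neg A (plus A x y) = plus A (neg A y) (neg A x)"
proof -
  assume a: "x \<in> carrier A" "y \<in> carrier A"
  have "plus A (plus A (neg A y) (neg A x)) (plus A x y) = zero A" using a by simp
  thus ?thesis using a neg_unique[of "plus A (neg A y) (neg A x)" "plus A x y"] by simp
qed
lemma idem_zero: "x \<in> carrier A \<Longrightarrow> plus A x x = x \<Longrightarrow> x = zero A"
  by (metis lcancel rz zero_c)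

definition cen where "cen c \<longleftrightarrow> c \<in> carrier A \<and> (\<forall>x\<in>carrier A. plus A x c = plus A c x)"
lemma cen_comm: "cen c \<Longrightarrow> x \<in> carrier A \<Longrightarrow> plus A x c = plus A c x" unfolding cen_def by blast
lemma cen_swap: "cen c \<Longrightarrow> x \<in> carrier A \<Longrightarrow> z \<in> carrier A \<Longrightarrow> plus A x (plus A c z) = plus A c (plus A x z)"
  unfolding cen_def by (metis assoc)
lemma cen_neg: "cen c \<Longrightarrow> cen (neg A c)"
proof -
  assume c: "cen c"
  have cc: "c \<in> carrier A" using c cen_def by blast
  { fix x assume x: "x \<in> carrier A"
    have "plus A (neg A x) c = plus A c (neg A x)" using c x cen_comm by simp
    hence "neg A (plus A (neg A x) c) = neg A (plus A c (neg A x))" by simp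
    hence "plus A (neg A c) x = plus A x (neg A c)" using x cc by simp
    hence "plus A x (neg A c) = plus A (neg A c) x" by simp }
  thus ?thesis using cc unfolding cen_def by simp
qed
end



definition rho3 :: "'a \<Rightarrow> 'a \<Rightarrow> 'a \<Rightarrow> nat \<Rightarrow> 'a" where
  "rho3 x y z = (\<lambda>n. if n = 0 then x else if n = 1 then y else z)"

lemma mci_sat:
  assumes "in_C Eqs A" "eq \<in> Eqs" "x \<in> carrier A" "y \<in> carrier A" "z \<in> carrier A"
  shows "eval A (rho3 x y z) (fst eq) = eval A (rho3 x y z) (snd eq)"
proof -
  have "satisfies A eq" using assms(1,2) unfolding in_C_def by blast
  moreover have "\<forall>n. rho3 x y z n \<in> carrier A" using assms(3-5) unfolding rho3_def by auto
  ultimately show ?thesis unfolding satisfies_def by blast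
qed

lemma rho3_simps[simp]: "rho3 x y z 0 = x" "rho3 x y z 1 = y" "rho3 x y z (Suc 0) = y" "rho3 x y z 2 = z"
  unfolding rho3_def by auto

context
  fixes Eqs conv and A :: "('a,'o,'u) alg"
  assumes mci: "MCI Eqs conv" and inC: "in_C Eqs A"
begin
interpretation galg A using inC unfolding in_C_def by unfold_locales blast

lemma mci_conv: "x \<in> carrier A \<Longrightarrow> y \<in> carrier A \<Longrightarrow> bin A (conv o') x y = bin A o' y x"
  using mci_sat[OF inC, of "(Bin (conv o') (Var 0) (Var 1), Bin o' (Var 1) (Var 0))" x y x] mci
  unfolding MCI_def by auto

lemma mci_distl: "x \<in> carrier A \<Longrightarrow> y \<in> carrier A \<Longrightarrow> z \<in> carrier A \<Longrightarrow>
   bin A o' x (plus A y z) = plus A (bin A o' x y) (bin A o' x z)"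
  using mci_sat[OF inC, of "(Bin o' (Var 0) (Plus (Var 1) (Var 2)),
             Plus (Bin o' (Var 0) (Var 1)) (Bin o' (Var 0) (Var 2)))" x y z] mci
  unfolding MCI_def by auto

lemma mci_distr: "x \<in> carrier A \<Longrightarrow> y \<in> carrier A \<Longrightarrow> z \<in> carrier A \<Longrightarrow>
   bin A o' (plus A x y) z = plus A (bin A o' x z) (bin A o' y z)"
  by (metis mci_conv mci_distl plus_c)

lemma mci_cen: "x \<in> carrier A \<Longrightarrow> y \<in> carrier A \<Longrightarrow> z \<in> carrier A \<Longrightarrow>
   plus A x (bin A o' y z) = plus A (bin A o' y z) x"
  using mci_sat[OF inC, of "(Plus (Var 0) (Bin o' (Var 1) (Var 2)),
             Plus (Bin o' (Var 1) (Var 2)) (Var 0))" x y z] mci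
  unfolding MCI_def by auto

lemma bin_zero_r: "x \<in> carrier A \<Longrightarrow> bin A o' x (zero A) = zero A"
  by (metis idem_zero bin_c lz mci_distl zero_c)

lemma bin_zero_l: "x \<in> carrier A \<Longrightarrow> bin A o' (zero A) x = zero A"
  by (metis idem_zero bin_c lz mci_distr zero_c)

lemma bin_neg_r: "x \<in> carrier A \<Longrightarrow> y \<in> carrier A \<Longrightarrow> bin A o' x (neg A y) = neg A (bin A o' x y)"
  by (metis bin_c bin_zero_r mci_distl neg_c neg_unique ln)

lemma bin_neg_l: "x \<in> carrier A \<Longrightarrow> y \<in> carrier A \<Longrightarrow> bin A o' (neg A x) y = neg A (bin A o' x y)"
  by (metis bin_c bin_zero_l mci_distr neg_c neg_unique ln)

lemma bin_cen: "x \<in> carrier A \<Longrightarrow> y \<in> carrier A \<Longrightarrow> cen (bin A o' x y)"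
  unfolding cen_def using mci_cen by auto
end




lemma hom_facts:
  assumes "hom A B f"
  shows "x \<in> carrier A \<Longrightarrow> f x \<in> carrier B" "f (zero A) = zero B"
    "x \<in> carrier A \<Longrightarrow> y \<in> carrier A \<Longrightarrow> f (plus A x y) = plus B (f x) (f y)"
    "x \<in> carrier A \<Longrightarrow> f (neg A x) = neg B (f x)"
    "x \<in> carrier A \<Longrightarrow> y \<in> carrier A \<Longrightarrow> f (bin A o' x y) = bin B o' (f x) (f y)"
  using assms unfolding hom_def by blast+

lemma da_props:
  fixes R :: "('r,'o,'u) alg" and E :: "('e,'o,'u) alg" and ac :: "'r \<Rightarrow> 'e \<Rightarrow> 'e" and bc :: "'o \<Rightarrow> 'r \<Rightarrow> 'e \<Rightarrow> 'e"
  assumes mci: "MCI Eqs conv" and iR: "in_C Eqs R" and iE: "in_C Eqs E"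
    and da: "derived_action Eqs R E ac bc"
    and r: "r \<in> carrier R" and r': "r' \<in> carrier R" and e: "e \<in> carrier E" and e': "e' \<in> carrier E"
  shows "ac (plus R r r') e = ac r (ac r' e)"
    "ac r (plus E e e') = plus E (ac r e) (ac r e')"
    "ac (zero R) e = e"
    "bc o' (plus R r r') e = plus E (bc o' r e) (bc o' r' e)"
    "bc o' r (plus E e e') = plus E (bc o' r e) (bc o' r e')"
    "plus E e' (bc o' r e) = plus E (bc o' r e) e'"
proof -
  interpret R: galg R using iR unfolding in_C_def by unfold_locales blast
  interpret E: galg E using iE unfolding in_C_def by unfold_locales blast
  have cl: "\<And>r e. r \<in> carrier R \<Longrightarrow> e \<in> carrier E \<Longrightarrow> ac r e \<in> carrier E \<and> (\<forall>o'. bc o' r e \<in> carrier E)"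
    using da unfolding derived_action_def by blast
  obtain B :: "('r \<times> 'e, 'o, 'u) alg" and p i \<sigma> where
    iB: "in_C Eqs B" and hi: "hom E B i" and hs: "hom R B \<sigma>" and inj: "inj_on i (carrier E)"
    and f: "\<And>r e. r\<in>carrier R \<Longrightarrow> e\<in>carrier E \<Longrightarrow>
           i (ac r e) = plus B (plus B (\<sigma> r) (i e)) (neg B (\<sigma> r))
         \<and> (\<forall>o'. i (bc o' r e) = bin B o' (\<sigma> r) (i e))"
    using da unfolding derived_action_def by blast
  interpret B: galg B using iB unfolding in_C_def by unfold_locales blast
  note hi' = hom_facts[OF hi] and hs' = hom_facts[OF hs]
  have a1: "ac (plus R r r') e \<in> carrier E" "ac r (ac r' e) \<in> carrier E" using cl r r' e by auto
  have "i (ac (plus R r r') e) = i (ac r (ac r' e))"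
    using f r r' e cl by (simp add: hi' hs')
  then show "ac (plus R r r') e = ac r (ac r' e)" using inj a1 by (meson inj_onD)
  have "i (ac r (plus E e e')) = i (plus E (ac r e) (ac r e'))"
    using f r e e' cl by (simp add: hi' hs')
  then show "ac r (plus E e e') = plus E (ac r e) (ac r e')" using inj r e e' cl by (meson inj_onD E.plus_c)
  have "i (ac (zero R) e) = i e"
    using f e cl by (simp add: hi' hs')
  then show "ac (zero R) e = e" using inj e cl by (meson inj_onD R.zero_c)
  have "i (bc o' (plus R r r') e) = i (plus E (bc o' r e) (bc o' r' e))"
    using f r r' e cl by (simp add: hi' hs' mci_distr[OF mci iB])
  then show "bc o' (plus R r r') e = plus E (bc o' r e) (bc o' r' e)" using inj r r' e cl by (meson inj_onD E.plus_c R.plus_c)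
  have "i (bc o' r (plus E e e')) = i (plus E (bc o' r e) (bc o' r e'))"
    using f r e e' cl by (simp add: hi' hs' mci_distl[OF mci iB])
  then show "bc o' r (plus E e e') = plus E (bc o' r e) (bc o' r e')" using inj r e e' cl by (meson inj_onD E.plus_c)
  have "i (plus E e' (bc o' r e)) = i (plus E (bc o' r e) e')"
    using f r e e' cl by (simp add: hi' hs' mci_cen[OF mci iB])
  then show "plus E e' (bc o' r e) = plus E (bc o' r e) e'" using inj r e e' cl by (meson inj_onD E.plus_c)
qed




locale setting =
  fixes Eqs :: "('o,'u) trm rel" and conv :: "'o \<Rightarrow> 'o"
    and X :: "('e,'r,'o,'u) xmod" and X' :: "('e2,'r2,'o,'u) xmod"
  assumes mci: "MCI Eqs conv" and cmX: "crossed_module Eqs X" and cmX': "crossed_module Eqs X'"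
begin

lemma inC: "in_C Eqs (xE X)" "in_C Eqs (xR X)" "in_C Eqs (xE X')" "in_C Eqs (xR X')"
  using cmX cmX' unfolding crossed_module_def by auto

sublocale E: galg "xE X'" using inC(3) unfolding in_C_def by unfold_locales blast
sublocale R': galg "xR X'" using inC(4) unfolding in_C_def by unfold_locales blast
sublocale R: galg "xR X" using inC(2) unfolding in_C_def by unfold_locales blast
sublocale E0: galg "xE X" using inC(1) unfolding in_C_def by unfold_locales blast

abbreviation "CE \<equiv> carrier (xE X')"
abbreviation "CR \<equiv> carrier (xR X)"
abbreviation "CR' \<equiv> carrier (xR X')"

lemma da: "derived_action Eqs (xR X') (xE X') (act X') (bact X')"
  using cmX' unfolding crossed_module_def by blast

lemma act_c[simp]: "r \<in> CR' \<Longrightarrow> e \<in> CE \<Longrightarrow> act X' r e \<in> CE"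
  using da unfolding derived_action_def by blast
lemma bact_c[simp]: "r \<in> CR' \<Longrightarrow> e \<in> CE \<Longrightarrow> bact X' o' r e \<in> CE"
  using da unfolding derived_action_def by blast

lemmas dp = da_props[OF mci inC(4) inC(3) da]

lemma act_pr: "r \<in> CR' \<Longrightarrow> r' \<in> CR' \<Longrightarrow> e \<in> CE \<Longrightarrow> act X' (plus (xR X') r r') e = act X' r (act X' r' e)"
  using dp(1) by blast
lemma act_pe[simp]: "r \<in> CR' \<Longrightarrow> e \<in> CE \<Longrightarrow> e' \<in> CE \<Longrightarrow> act X' r (plus (xE X') e e') = plus (xE X') (act X' r e) (act X' r e')"
  using dp(2) by blast
lemma act_z[simp]: "e \<in> CE \<Longrightarrow> act X' (zero (xR X')) e = e"
  using dp(3) R'.zero_c by blast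
lemma bact_pr: "r \<in> CR' \<Longrightarrow> r' \<in> CR' \<Longrightarrow> e \<in> CE \<Longrightarrow> bact X' o' (plus (xR X') r r') e = plus (xE X') (bact X' o' r e) (bact X' o' r' e)"
  using dp(4) by blast
lemma bact_pe[simp]: "r \<in> CR' \<Longrightarrow> e \<in> CE \<Longrightarrow> e' \<in> CE \<Longrightarrow> bact X' o' r (plus (xE X') e e') = plus (xE X') (bact X' o' r e) (bact X' o' r e')"
  using dp(5) by blast
lemma bact_cen: "r \<in> CR' \<Longrightarrow> e \<in> CE \<Longrightarrow> E.cen (bact X' o' r e)"
  unfolding E.cen_def using dp(6) by simp

lemma act_ze[simp]: "r \<in> CR' \<Longrightarrow> act X' r (zero (xE X')) = zero (xE X')"
  by (metis E.idem_zero E.rz E.zero_c act_c act_pe)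
lemma act_neg[simp]: "r \<in> CR' \<Longrightarrow> e \<in> CE \<Longrightarrow> act X' r (neg (xE X') e) = neg (xE X') (act X' r e)"
  by (metis E.neg_unique E.ln E.neg_c act_c act_pe act_ze)
lemma bact_ze[simp]: "r \<in> CR' \<Longrightarrow> bact X' o' r (zero (xE X')) = zero (xE X')"
  by (metis E.idem_zero E.rz E.zero_c bact_c bact_pe)
lemma bact_neg[simp]: "r \<in> CR' \<Longrightarrow> e \<in> CE \<Longrightarrow> bact X' o' r (neg (xE X') e) = neg (xE X') (bact X' o' r e)"
  by (metis E.neg_unique E.ln E.neg_c bact_c bact_pe bact_ze)

lemma bdh: "hom (xE X') (xR X') (bd X')" using cmX' unfolding crossed_module_def by blast
lemmas bd_facts[simp] = hom_facts[OF bdh]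

lemma xm_act[simp]: "e \<in> CE \<Longrightarrow> e' \<in> CE \<Longrightarrow> act X' (bd X' e) e' = plus (xE X') (plus (xE X') e e') (neg (xE X') e)"
  using cmX' unfolding crossed_module_def by blast
lemma xm_bact[simp]: "e \<in> CE \<Longrightarrow> e' \<in> CE \<Longrightarrow> bact X' o' (bd X' e) e' = bin (xE X') o' e e'"
  using cmX' unfolding crossed_module_def by blast

lemmas Econv[simp] = mci_conv[OF mci inC(3)]
lemmas Ebnr[simp] = bin_neg_r[OF mci inC(3)]
lemmas Ebnl[simp] = bin_neg_l[OF mci inC(3)]
lemmas Ebzr[simp] = bin_zero_r[OF mci inC(3)]
lemmas Ebcen = bin_cen[OF mci inC(3)]
lemmas Edl = mci_distl[OF mci inC(3)]
lemmas Edr = mci_distr[OF mci inC(3)]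

end


context setting begin

lemma derD:
  assumes "derivation conv X X' f0 s"
  shows "r \<in> CR \<Longrightarrow> s r \<in> CE"
    "g \<in> CR \<Longrightarrow> h \<in> CR \<Longrightarrow> s (plus (xR X) g h) = plus (xE X') (act X' (f0 (neg (xR X) h)) (s g)) (s h)"
    "g \<in> CR \<Longrightarrow> h \<in> CR \<Longrightarrow> s (bin (xR X) o' g h) =
          plus (xE X')
            (plus (xE X') (bact X' o' (f0 g) (s h)) (bact X' (conv o') (f0 h) (s g)))
            (bin (xE X') o' (s g) (s h))"
  using assms unfolding derivation_def by blast+

lemma morD:
  assumes "xmod_morphism X X' f"
  shows "hom (xE X) (xE X') (fst f)" "hom (xR X) (xR X') (snd f)"
  using assms unfolding xmod_morphism_def by blast+

lemma der_zero:
  assumes f0: "hom (xR X) (xR X') f0" and d: "derivation conv X X' f0 s"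
  shows "s (zero (xR X)) = zero (xE X')"
proof -
  note F = hom_facts[OF f0]
  have "s (plus (xR X) (zero (xR X)) (zero (xR X))) = plus (xE X') (act X' (f0 (neg (xR X) (zero (xR X)))) (s (zero (xR X)))) (s (zero (xR X)))"
    by (rule derD(2)[OF d]) simp_all
  hence "s (zero (xR X)) = plus (xE X') (s (zero (xR X))) (s (zero (xR X)))"
    using derD(1)[OF d] by (simp add: F)
  thus ?thesis using derD(1)[OF d] E.idem_zero by simp
qed

lemma der_negb:
  assumes f0: "hom (xR X) (xR X') f0" and d: "derivation conv X X' f0 s" and b: "b \<in> CR"
  shows "act X' (f0 (neg (xR X) b)) (s (neg (xR X) b)) = neg (xE X') (s b)"
proof -
  note F = hom_facts[OF f0]
  have "s (plus (xR X) (neg (xR X) b) b) = plus (xE X') (act X' (f0 (neg (xR X) b)) (s (neg (xR X) b))) (s b)"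
    by (rule derD(2)[OF d]) (simp_all add: b)
  hence "plus (xE X') (act X' (f0 (neg (xR X) b)) (s (neg (xR X) b))) (s b) = zero (xE X')"
    using der_zero[OF f0 d] b by simp
  thus ?thesis using E.neg_unique derD(1)[OF d] b F by simp
qed

lemma connD:
  assumes "connects X X' f g s"
  shows "r \<in> CR \<Longrightarrow> snd g r = plus (xR X') (snd f r) (bd X' (s r))"
    "e \<in> carrier (xE X) \<Longrightarrow> fst g e = plus (xE X') (fst f e) (s (bd X e))"
  using assms unfolding connects_def by blast+

lemma act_g:
  assumes f0: "hom (xR X) (xR X') (snd f)" and d: "derivation conv X X' (snd f) s"
    and c: "connects X X' f g s" and b: "b \<in> CR" and y: "y \<in> CE"
  shows "act X' (snd g (neg (xR X) b)) y
       = plus (xE X') (neg (xE X') (s b)) (plus (xE X') (act X' (snd f (neg (xR X) b)) y) (s b))"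
proof -
  note F = hom_facts[OF f0]
  have sc: "s (neg (xR X) b) \<in> CE" "s b \<in> CE" using derD(1)[OF d] b by auto
  have "act X' (snd g (neg (xR X) b)) y = act X' (snd f (neg (xR X) b)) (act X' (bd X' (s (neg (xR X) b))) y)"
    using connD(1)[OF c] b sc y F by (simp add: act_pr)
  also have "\<dots> = plus (xE X') (neg (xE X') (s b)) (plus (xE X') (act X' (snd f (neg (xR X) b)) y) (s b))"
    using sc y b F der_negb[OF f0 d b] by simp
  finally show ?thesis .
qed

lemma bact_g:
  assumes f0: "hom (xR X) (xR X') (snd f)" and d: "derivation conv X X' (snd f) s"
    and c: "connects X X' f g s" and a: "a \<in> CR" and y: "y \<in> CE"
  shows "bact X' o' (snd g a) y = plus (xE X') (bact X' o' (snd f a) y) (bin (xE X') o' (s a) y)"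
  using connD(1)[OF c] a y hom_facts[OF f0] derD(1)[OF d] by (simp add: bact_pr)

end


context setting begin

lemma bdX: "hom (xE X) (xR X) (bd X)" using cmX unfolding crossed_module_def by blast

lemma part_id:
  assumes mf: "xmod_morphism X X' f"
  shows "derivation conv X X' (snd f) (\<lambda>r. zero (xE X')) \<and> connects X X' f f (\<lambda>r. zero (xE X'))"
proof -
  note F0 = hom_facts[OF morD(2)[OF mf]] and F1 = hom_facts[OF morD(1)[OF mf]]
  show ?thesis unfolding derivation_def connects_def
    by (auto simp: F0 F1)
qed

lemma part_inv:
  assumes mf: "xmod_morphism X X' f" and mg: "xmod_morphism X X' g"
    and d: "derivation conv X X' (snd f) s" and c: "connects X X' f g s"
  shows "derivation conv X X' (snd g) (\<lambda>r. neg (xE X') (s r)) \<and> connects X X' g f (\<lambda>r. neg (xE X') (s r))"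
proof -
  note f0 = morD(2)[OF mf]
  note F0 = hom_facts[OF morD(2)[OF mf]] and F1 = hom_facts[OF morD(1)[OF mf]]
  note G0 = hom_facts[OF morD(2)[OF mg]] and G1 = hom_facts[OF morD(1)[OF mg]]
  note sc = derD(1)[OF d]
  have D1: "neg (xE X') (s (plus (xR X) a b)) =
        plus (xE X') (act X' (snd g (neg (xR X) b)) (neg (xE X') (s a))) (neg (xE X') (s b))"
    if a: "a \<in> CR" and b: "b \<in> CR" for a b
    using derD(2)[OF d a b] act_g[OF f0 d c b, of "neg (xE X') (s a)"] a b sc F0 by simp
  have D2: "neg (xE X') (s (bin (xR X) o' a b)) =
        plus (xE X') (plus (xE X') (bact X' o' (snd g a) (neg (xE X') (s b)))
            (bact X' (conv o') (snd g b) (neg (xE X') (s a))))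
          (bin (xE X') o' (neg (xE X') (s a)) (neg (xE X') (s b)))"
    if a: "a \<in> CR" and b: "b \<in> CR" for a b o'
  proof -
    define A where "A = bact X' o' (snd f a) (s b)"
    define B where "B = bact X' (conv o') (snd f b) (s a)"
    define P where "P = bin (xE X') o' (s a) (s b)"
    have cl: "A \<in> CE" "B \<in> CE" "P \<in> CE" using a b sc F0 unfolding A_def B_def P_def by auto
    have cA: "E.cen (neg (xE X') A)" unfolding A_def using bact_cen E.cen_neg a b sc F0 by simp
    have L: "neg (xE X') (s (bin (xR X) o' a b)) = plus (xE X') (neg (xE X') P) (plus (xE X') (neg (xE X') B) (neg (xE X') A))"
      using derD(3)[OF d a b, of o'] cl unfolding A_def B_def P_def by simp
    have R: "plus (xE X') (plus (xE X') (bact X' o' (snd g a) (neg (xE X') (s b)))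
            (bact X' (conv o') (snd g b) (neg (xE X') (s a))))
          (bin (xE X') o' (neg (xE X') (s a)) (neg (xE X') (s b)))
       = plus (xE X') (neg (xE X') A) (plus (xE X') (neg (xE X') P) (neg (xE X') B))"
      using bact_g[OF f0 d c a, of "neg (xE X') (s b)" o'] bact_g[OF f0 d c b, of "neg (xE X') (s a)" "conv o'"]
        a b sc F0 cl unfolding A_def B_def P_def by simp
    have "plus (xE X') (neg (xE X') P) (plus (xE X') (neg (xE X') B) (neg (xE X') A))
        = plus (xE X') (neg (xE X') P) (plus (xE X') (neg (xE X') A) (neg (xE X') B))"
      using E.cen_comm[OF cA, of "neg (xE X') B"] cl by simp
    also have "\<dots> = plus (xE X') (neg (xE X') A) (plus (xE X') (neg (xE X') P) (neg (xE X') B))"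
      using E.cen_swap[OF cA, of "neg (xE X') P" "neg (xE X') B"] cl by simp
    finally show ?thesis using L R by simp
  qed
  have "derivation conv X X' (snd g) (\<lambda>r. neg (xE X') (s r))"
    unfolding derivation_def using D1 D2 sc by simp
  moreover have "connects X X' g f (\<lambda>r. neg (xE X') (s r))"
    unfolding connects_def using connD[OF c] sc F0 F1 hom_facts[OF bdX] by simp
  ultimately show ?thesis by blast
qed

end


context setting begin

lemma part_comp:
  assumes mf: "xmod_morphism X X' f" and mg: "xmod_morphism X X' g" and mh: "xmod_morphism X X' h"
    and d: "derivation conv X X' (snd f) s" and c: "connects X X' f g s"
    and d': "derivation conv X X' (snd g) s'" and c': "connects X X' g h s'"
  shows "derivation conv X X' (snd f) (\<lambda>r. plus (xE X') (s r) (s' r))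
      \<and> connects X X' f h (\<lambda>r. plus (xE X') (s r) (s' r))"
proof -
  note f0 = morD(2)[OF mf] and g0 = morD(2)[OF mg]
  note F0 = hom_facts[OF morD(2)[OF mf]] and F1 = hom_facts[OF morD(1)[OF mf]]
  note G0 = hom_facts[OF morD(2)[OF mg]] and G1 = hom_facts[OF morD(1)[OF mg]]
  note sc = derD(1)[OF d] and sc' = derD(1)[OF d']
  have D1: "plus (xE X') (s (plus (xR X) a b)) (s' (plus (xR X) a b)) =
        plus (xE X') (act X' (snd f (neg (xR X) b)) (plus (xE X') (s a) (s' a))) (plus (xE X') (s b) (s' b))"
    if a: "a \<in> CR" and b: "b \<in> CR" for a b
    using derD(2)[OF d a b] derD(2)[OF d' a b] act_g[OF f0 d c b, of "s' a"] a b sc sc' F0 by simp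
  have D2: "plus (xE X') (s (bin (xR X) o' a b)) (s' (bin (xR X) o' a b)) =
        plus (xE X') (plus (xE X') (bact X' o' (snd f a) (plus (xE X') (s b) (s' b)))
            (bact X' (conv o') (snd f b) (plus (xE X') (s a) (s' a))))
          (bin (xE X') o' (plus (xE X') (s a) (s' a)) (plus (xE X') (s b) (s' b)))"
    if a: "a \<in> CR" and b: "b \<in> CR" for a b o'
  proof -
    define A where "A = bact X' o' (snd f a) (s b)"
    define B where "B = bact X' (conv o') (snd f b) (s a)"
    define P where "P = bin (xE X') o' (s a) (s b)"
    define A' where "A' = bact X' o' (snd f a) (s' b)"
    define B' where "B' = bact X' (conv o') (snd f b) (s' a)"
    define Q1 where "Q1 = bin (xE X') o' (s a) (s' b)"
    define Q2 where "Q2 = bin (xE X') o' (s' a) (s b)"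
    define P2 where "P2 = bin (xE X') o' (s' a) (s' b)"
    have cl: "A \<in> CE" "B \<in> CE" "P \<in> CE" "A' \<in> CE" "B' \<in> CE" "Q1 \<in> CE" "Q2 \<in> CE" "P2 \<in> CE"
      using a b sc sc' F0 unfolding A_def B_def P_def A'_def B'_def Q1_def Q2_def P2_def by auto
    have cA': "E.cen A'" unfolding A'_def using bact_cen a b sc' F0 by simp
    have cB': "E.cen B'" unfolding B'_def using bact_cen a b sc' F0 by simp
    have L: "plus (xE X') (s (bin (xR X) o' a b)) (s' (bin (xR X) o' a b)) =
       plus (xE X') A (plus (xE X') B (plus (xE X') P (plus (xE X') A' (plus (xE X') Q1 (plus (xE X') B' (plus (xE X') Q2 P2))))))"
      using derD(3)[OF d a b, of o'] derD(3)[OF d' a b, of o'] 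
        bact_g[OF f0 d c a, of "s' b" o'] bact_g[OF f0 d c b, of "s' a" "conv o'"]
        a b sc sc' F0 cl unfolding A_def B_def P_def A'_def B'_def Q1_def Q2_def P2_def by simp
    have bb: "bin (xE X') o' (plus (xE X') (s a) (s' a)) (plus (xE X') (s b) (s' b))
        = plus (xE X') P (plus (xE X') Q1 (plus (xE X') Q2 P2))"
      using a b sc sc' cl unfolding P_def Q1_def Q2_def P2_def by (simp add: Edl Edr E.cen_swap[OF Ebcen[of "s' a" "s b" o']])
    have R: "plus (xE X') (plus (xE X') (bact X' o' (snd f a) (plus (xE X') (s b) (s' b)))
            (bact X' (conv o') (snd f b) (plus (xE X') (s a) (s' a))))
          (bin (xE X') o' (plus (xE X') (s a) (s' a)) (plus (xE X') (s b) (s' b)))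
       = plus (xE X') A (plus (xE X') A' (plus (xE X') B (plus (xE X') B' (plus (xE X') P (plus (xE X') Q1 (plus (xE X') Q2 P2))))))"
      unfolding bb using a b sc sc' F0 cl unfolding A_def B_def A'_def B'_def by simp
    have s1: "plus (xE X') P (plus (xE X') A' (plus (xE X') Q1 (plus (xE X') B' (plus (xE X') Q2 P2))))
      = plus (xE X') A' (plus (xE X') P (plus (xE X') Q1 (plus (xE X') B' (plus (xE X') Q2 P2))))"
      using E.cen_swap[OF cA'] cl by simp
    have s2: "plus (xE X') B (plus (xE X') A' (plus (xE X') P (plus (xE X') Q1 (plus (xE X') B' (plus (xE X') Q2 P2)))))
      = plus (xE X') A' (plus (xE X') B (plus (xE X') P (plus (xE X') Q1 (plus (xE X') B' (plus (xE X') Q2 P2)))))"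
      using E.cen_swap[OF cA'] cl by simp
    have s3: "plus (xE X') Q1 (plus (xE X') B' (plus (xE X') Q2 P2)) = plus (xE X') B' (plus (xE X') Q1 (plus (xE X') Q2 P2))"
      using E.cen_swap[OF cB'] cl by simp
    have s4: "plus (xE X') P (plus (xE X') B' (plus (xE X') Q1 (plus (xE X') Q2 P2))) = plus (xE X') B' (plus (xE X') P (plus (xE X') Q1 (plus (xE X') Q2 P2)))"
      using E.cen_swap[OF cB'] cl by simp
    show ?thesis unfolding L R unfolding s1 unfolding s2 unfolding s3 unfolding s4 ..
  qed
  have "derivation conv X X' (snd f) (\<lambda>r. plus (xE X') (s r) (s' r))"
    unfolding derivation_def using D1 D2 sc sc' by simp
  moreover have "connects X X' f h (\<lambda>r. plus (xE X') (s r) (s' r))"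
    unfolding connects_def using connD[OF c] connD[OF c'] sc sc' F0 F1 G0 G1 hom_facts[OF bdX] by simp
  ultimately show ?thesis by blast
qed

lemma part_equiv: "equiv {f. xmod_morphism X X' f} (homotopic conv X X')"
proof (rule equivI)
  show "homotopic conv X X' \<subseteq> {f. xmod_morphism X X' f} \<times> {f. xmod_morphism X X' f}"
    unfolding homotopic_def by auto
  show "refl_on {f. xmod_morphism X X' f} (homotopic conv X X')"
    unfolding refl_on_def homotopic_def using part_id by blast
  show "sym (homotopic conv X X')"
    unfolding sym_def homotopic_def using part_inv by blast
  show "trans (homotopic conv X X')"
    unfolding trans_def homotopic_def using part_comp by blast
qed

end


theorem mainTheorem5:
  fixes Eqs :: "('o, 'u) trm rel" and conv :: "'o \<Rightarrow> 'o"
    and X :: "('e, 'r, 'o, 'u) xmod" and X' :: "('e2, 'r2, 'o, 'u) xmod"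
  assumes "MCI Eqs conv"
    and "crossed_module Eqs X" and "crossed_module Eqs X'"
  shows
    \<comment> \<open>identities: the zero derivation\<close>
    "(\<forall>f. xmod_morphism X X' f \<longrightarrow>
        derivation conv X X' (snd f) (\<lambda>r. zero (xE X'))
      \<and> connects X X' f f (\<lambda>r. zero (xE X')))
   \<comment> \<open>inverses: s \<mapsto> -s\<close>
   \<and> (\<forall>f g s. xmod_morphism X X' f \<longrightarrow> xmod_morphism X X' g \<longrightarrow>
        derivation conv X X' (snd f) s \<longrightarrow> connects X X' f g s \<longrightarrow>
        derivation conv X X' (snd g) (\<lambda>r. neg (xE X') (s r))
      \<and> connects X X' g f (\<lambda>r. neg (xE X') (s r)))
   \<comment> \<open>composition: pointwise sum s + s'\<close>
   \<and> (\<forall>f g h s s'. xmod_morphism X X' f \<longrightarrow> xmod_morphism X X' g \<longrightarrow> xmod_morphism X X' h \<longrightarrow>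
        derivation conv X X' (snd f) s \<longrightarrow> connects X X' f g s \<longrightarrow>
        derivation conv X X' (snd g) s' \<longrightarrow> connects X X' g h s' \<longrightarrow>
        derivation conv X X' (snd f) (\<lambda>r. plus (xE X') (s r) (s' r))
      \<and> connects X X' f h (\<lambda>r. plus (xE X') (s r) (s' r)))
   \<comment> \<open>groupoid laws (pointwise on the carrier of R)\<close>
   \<and> (\<forall>s s' s''. (\<forall>r\<in>carrier (xR X). s r \<in> carrier (xE X') \<and> s' r \<in> carrier (xE X')
                                      \<and> s'' r \<in> carrier (xE X')) \<longrightarrow>
        (\<forall>r\<in>carrier (xR X).
           plus (xE X') (plus (xE X') (s r) (s' r)) (s'' r)
             = plus (xE X') (s r) (plus (xE X') (s' r) (s'' r))
         \<and> plus (xE X') (zero (xE X')) (s r) = s r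
         \<and> plus (xE X') (s r) (zero (xE X')) = s r
         \<and> plus (xE X') (s r) (neg (xE X') (s r)) = zero (xE X')
         \<and> plus (xE X') (neg (xE X') (s r)) (s r) = zero (xE X')))
   \<comment> \<open>in particular: homotopy is an equivalence relation on crossed module morphisms\<close>
   \<and> equiv {f. xmod_morphism X X' f} (homotopic conv X X')"
  proof -
  interpret setting Eqs conv X X' using assms by unfold_locales
  have laws: "\<forall>s s' s''. (\<forall>r\<in>carrier (xR X). s r \<in> carrier (xE X') \<and> s' r \<in> carrier (xE X')
                                      \<and> s'' r \<in> carrier (xE X')) \<longrightarrow>
        (\<forall>r\<in>carrier (xR X).
           plus (xE X') (plus (xE X') (s r) (s' r)) (s'' r)
             = plus (xE X') (s r) (plus (xE X') (s' r) (s'' r))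
         \<and> plus (xE X') (zero (xE X')) (s r) = s r
         \<and> plus (xE X') (s r) (zero (xE X')) = s r
         \<and> plus (xE X') (s r) (neg (xE X') (s r)) = zero (xE X')
         \<and> plus (xE X') (neg (xE X') (s r)) (s r) = zero (xE X'))" by simp
  show ?thesis using part_id part_inv part_comp part_equiv laws by blast
qed

end
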